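(* For all $M,H\in\mathbb N$ and $x\in X$ there is a set $\Lambda\subseteq\mathbb N$ such that (1) $\lim_{N\to\infty}\frac1N\#(\{1,\dots,N\}\cap\Lambda)=1$, and (2) for every $F\in\mathcal C_M(X)$ and every $n\in\Lambda$, the value $F(\hat T^{n+h}x)$ is the same for all $0\le h\le H-1$.
   Context: Fix integers $2\le q_1<q_2<\cdots$ such that $q_{k+1}>q_k^4+3q_k$ for every $k\ge1$. For $k\ge1$ put $q^{(0)}_k=q_{2k}$, $q^{(1)}_k=q_{2k+1}$, $q^{(2)}_k=q^{(0)}_k-1$, $q^{(3)}_k=q^{(1)}_k-1$, and $L^{(i)}_k=\lfloor q^{(i)}_{k+1}/(3q^{(i)}_k)\rfloor$. Let $s^{(i)}_k\in\{-1,0,1\}^{\mathbb N}$ (indices $n\ge1$) be given by $s^{(i)}_k(n)=1$ if $n=jq^{(i)}_k$ with $1\le j\le L^{(i)}_k$, $s^{(i)}_k(n)=-1$ if $n=jq^{(i)}_k$ with $L^{(i)}_k<j\le2L^{(i)}_k$, and $s^{(i)}_k(n)=0$ otherwise. For $w\in\{-1,0,1\}^{\mathbb N}$ and $p\in\mathbb N_0$ let $\sigma^{-p}w$ be defined by $(\sigma^{-p}w)(n)=0$ for $1\le n\le p$ and $(\sigma^{-p}w)(n)=w(n-p)$ for $n>p$. For $l\le m$ write $w|_l^m=(w_l,\dots,w_m)$. Let $R^{(i)}_k=\{(\sigma^{-p}s^{(i)}_k)|_{q^{(i)}_k}^{q^{(i)}_{k+1}-1}:p=0,1,\dots,q^{(i)}_k\}$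 and $P^{(i)}=\{y\in\{-1,0,1\}^{\mathbb N}: y(n)=0\text{ for }1\le n<q^{(i)}_1,\ y|_{q^{(i)}_k}^{q^{(i)}_{k+1}-1}\in R^{(i)}_k\text{ for all }k\ge1\}$. Let $Z=\{-1,0,1\}^{\mathbb N}\times\{-1,0,1\}^{\mathbb Z}$, where each factor carries the metric $d(u,v)=3^{-\min\{|m|:u_m\neq v_m\}}$ and $Z$ the maximum of the two. $\sigma$ is the left shift $(\sigma u)_m=u_{m+1}$ (invertible on $\{-1,0,1\}^{\mathbb Z}$). Define $T:Z\to Z$, $T(y,z)=(\sigma y,\sigma^{y_1}z)$, and $X_i=\overline{\bigcup_{n\ge0}T^n(P^{(i)}\times\{-1,0,1\}^{\mathbb Z})}$ for $i\in\{0,1,2,3\}$. Let $X=X_0\times X_1\times X_2\times X_3\times\{0,1,2,3\}$ with $\hat T(p^{(0)},p^{(1)},p^{(2)},p^{(3)},i)=(Tp^{(0)},Tp^{(1)},Tp^{(2)},Tp^{(3)},i)$. For $p=(y,z)\in Z$ and $M\in\mathbb N$, $[p]_M=((y_1,\dots,y_M),(z_{-M},\dots,z_M))$. Writing points of $X$ as $(x^{(0)},x^{(1)},x^{(2)},x^{(3)},i)$, $\mathcal C_M(X)$ denotes the set of functions $F:X\to\mathbb C$ whose value depends only on $([x^{(\ell)}]_M)_{0\le\ell\le3}$ and $i$. *)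

theory Defs
  imports Complex_Main
begin

text \<open>Points of Z: a one-sided sequence y indexed by n \<ge> 1 (normalised by y 0 = 0)
  and a two-sided sequence z, both with values in {-1,0,1}.\<close>

type_synonym pt = "(nat \<Rightarrow> int) \<times> (int \<Rightarrow> int)"

definition tri :: "int set" where "tri = {-1, 0, 1}"

definition Zsp :: "pt set" where
  "Zsp = {(y, z). y 0 = 0 \<and> (\<forall>n. y n \<in> tri) \<and> (\<forall>m. z m \<in> tri)}"

definition dN :: "(nat \<Rightarrow> int) \<Rightarrow> (nat \<Rightarrow> int) \<Rightarrow> real" where
  "dN u v = (if \<forall>n\<ge>1. u n = v n then 0
             else 3 powr (- real (LEAST n. n \<ge> 1 \<and> u n \<noteq> v n)))"

definition dZZ :: "(int \<Rightarrow> int) \<Rightarrow> (int \<Rightarrow> int) \<Rightarrow> real" where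
  "dZZ u v = (if \<forall>m. u m = v m then 0
              else 3 powr (- real (LEAST k. \<exists>m. nat \<bar>m\<bar> = k \<and> u m \<noteq> v m)))"

definition dist_pt :: "pt \<Rightarrow> pt \<Rightarrow> real" where
  "dist_pt p p' = max (dN (fst p) (fst p')) (dZZ (snd p) (snd p'))"

definition closureZ :: "pt set \<Rightarrow> pt set" where
  "closureZ S = {p \<in> Zsp. \<forall>e>0. \<exists>q\<in>S. dist_pt p q < e}"

definition shiftN :: "(nat \<Rightarrow> int) \<Rightarrow> (nat \<Rightarrow> int)" where
  "shiftN y = (\<lambda>n. if n = 0 then 0 else y (Suc n))"

definition shiftZ :: "int \<Rightarrow> (int \<Rightarrow> int) \<Rightarrow> (int \<Rightarrow> int)" where
  "shiftZ k z = (\<lambda>m. z (m + k))"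

definition Tmap :: "pt \<Rightarrow> pt" where
  "Tmap p = (shiftN (fst p), shiftZ (fst p 1) (snd p))"

definition qi :: "(nat \<Rightarrow> nat) \<Rightarrow> nat \<Rightarrow> nat \<Rightarrow> nat" where
  "qi q i k = (if i = 0 then q (2*k) else if i = 1 then q (2*k+1)
               else if i = 2 then q (2*k) - 1 else q (2*k+1) - 1)"

definition Li :: "(nat \<Rightarrow> nat) \<Rightarrow> nat \<Rightarrow> nat \<Rightarrow> nat" where
  "Li q i k = qi q i (k+1) div (3 * qi q i k)"

definition sblk :: "(nat \<Rightarrow> nat) \<Rightarrow> nat \<Rightarrow> nat \<Rightarrow> nat \<Rightarrow> int" where
  "sblk q i k n =
     (if \<exists>j. 1 \<le> j \<and> j \<le> Li q i k \<and> n = j * qi q i k then 1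
      else if \<exists>j. Li q i k < j \<and> j \<le> 2 * Li q i k \<and> n = j * qi q i k then -1
      else 0)"

definition shiftR :: "nat \<Rightarrow> (nat \<Rightarrow> int) \<Rightarrow> (nat \<Rightarrow> int)" where
  "shiftR p w = (\<lambda>n. if n \<le> p then 0 else w (n - p))"

definition restr :: "(nat \<Rightarrow> int) \<Rightarrow> nat \<Rightarrow> nat \<Rightarrow> int list" where
  "restr w l m = map w [l..<Suc m]"

definition Rset :: "(nat \<Rightarrow> nat) \<Rightarrow> nat \<Rightarrow> nat \<Rightarrow> int list set" where
  "Rset q i k = {restr (shiftR p (sblk q i k)) (qi q i k) (qi q i (k+1) - 1) | p. p \<le> qi q i k}"

definition Pset :: "(nat \<Rightarrow> nat) \<Rightarrow> nat \<Rightarrow> (nat \<Rightarrow> int) set" where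
  "Pset q i = {y. y 0 = 0 \<and> (\<forall>n. y n \<in> tri)
                 \<and> (\<forall>n. 1 \<le> n \<and> n < qi q i 1 \<longrightarrow> y n = 0)
                 \<and> (\<forall>k\<ge>1. restr y (qi q i k) (qi q i (k+1) - 1) \<in> Rset q i k)}"

definition Xi :: "(nat \<Rightarrow> nat) \<Rightarrow> nat \<Rightarrow> pt set" where
  "Xi q i = closureZ (\<Union>n. (Tmap ^^ n) ` (Pset q i \<times> {z. \<forall>m. z m \<in> tri}))"

type_synonym xpt = "pt \<times> pt \<times> pt \<times> pt \<times> nat"

definition Xsp :: "(nat \<Rightarrow> nat) \<Rightarrow> xpt set" where
  "Xsp q = Xi q 0 \<times> Xi q 1 \<times> Xi q 2 \<times> Xi q 3 \<times> {0, 1, 2, 3}"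

fun That :: "xpt \<Rightarrow> xpt" where
  "That (a, b, c, d, i) = (Tmap a, Tmap b, Tmap c, Tmap d, i)"

definition cyl :: "nat \<Rightarrow> pt \<Rightarrow> int list \<times> int list" where
  "cyl M p = (map (fst p) [1..<Suc M], map (snd p) [- int M..int M])"

fun sameM :: "nat \<Rightarrow> xpt \<Rightarrow> xpt \<Rightarrow> bool" where
  "sameM M (a, b, c, d, i) (a', b', c', d', i') =
     (cyl M a = cyl M a' \<and> cyl M b = cyl M b' \<and> cyl M c = cyl M c' \<and> cyl M d = cyl M d' \<and> i = i')"

definition CM :: "(nat \<Rightarrow> nat) \<Rightarrow> nat \<Rightarrow> (xpt \<Rightarrow> complex) set" where
  "CM q M = {F. \<forall>x\<in>Xsp q. \<forall>x'\<in>Xsp q. sameM M x x' \<longrightarrow> F x = F x'}"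

end

theory Submission
  imports Defs
begin

lemma q_ge2:
  assumes "2 \<le> q 1" "\<forall>k\<ge>1. q k < q (Suc k)"
  shows "k \<ge> 1 \<Longrightarrow> 2 \<le> (q::nat\<Rightarrow>nat) k"
proof (induction k rule: dec_induct)
  case base then show ?case using assms by simp
next
  case (step n)
  then have "q n < q (Suc n)" using assms(2) by simp
  then show ?case using step by linarith
qed

lemma q_step:
  assumes "2 \<le> q 1" "\<forall>k\<ge>1. q k < q (Suc k)" "\<forall>k\<ge>1. q (Suc k) > q k ^ 4 + 3 * q k"
  and "k \<ge> 1"
  shows "4 * q k \<le> (q::nat\<Rightarrow>nat) (Suc k)"
proof -
  have "2 \<le> q k" using q_ge2[OF assms(1,2) assms(4)] .
  then have "q k \<le> q k ^ 4" by (intro self_le_power) auto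
  then show ?thesis using assms(3,4) by fastforce
qed

lemma Q_growth:
  assumes "2 \<le> q 1" "\<forall>k\<ge>1. q k < q (Suc k)" "\<forall>k\<ge>1. q (Suc k) > q k ^ 4 + 3 * q k"
  shows "\<forall>k\<ge>1. 1 \<le> qi q i k \<and> 6 * qi q i k \<le> qi q i (Suc k)"
proof (intro allI impI)
  fix k :: nat assume k: "k \<ge> 1"
  have a: "4 * q (2*k) \<le> q (Suc (2*k))" using q_step[OF assms] k by simp
  have b: "4 * q (Suc (2*k)) \<le> q (Suc (Suc (2*k)))" using q_step[OF assms] k by simp
  have c: "4 * q (Suc (Suc (2*k))) \<le> q (Suc (Suc (Suc (2*k))))" using q_step[OF assms] k by simp
  have d: "2 \<le> q (2*k)" using q_ge2[OF assms(1,2)] k by simp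
  have e: "2*(Suc k) = Suc (Suc (2*k))" by simp
  show "1 \<le> qi q i k \<and> 6 * qi q i k \<le> qi q i (Suc k)"
    unfolding qi_def e using a b c d by auto
qed

lemma f_mono:
  assumes G: "\<forall>k\<ge>1. 1 \<le> f k \<and> 6 * f k \<le> (f::nat\<Rightarrow>nat) (Suc k)"
  and "1 \<le> m" "m \<le> n"
  shows "f m \<le> f n"
  using assms(3)
proof (induction n rule: dec_induct)
  case base then show ?case by simp
next
  case (step n)
  have "1 \<le> n" using step assms(2) by simp
  then have "6 * f n \<le> f (Suc n)" using G by blast
  then show ?case using step by linarith
qed

lemma f_ge:
  assumes G: "\<forall>k\<ge>1. 1 \<le> f k \<and> 6 * f k \<le> (f::nat\<Rightarrow>nat) (Suc k)"
  and "1 \<le> n" shows "n \<le> f n"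
  using assms(2)
proof (induction n rule: dec_induct)
  case base then show ?case using G by simp
next
  case (step n)
  then have "1 \<le> f n \<and> 6 * f n \<le> f (Suc n)" using G by blast
  then show ?case using step by linarith
qed

lemma f_block:
  assumes G: "\<forall>k\<ge>1. 1 \<le> f k \<and> 6 * f k \<le> (f::nat\<Rightarrow>nat) (Suc k)"
  and "f 1 \<le> n" shows "\<exists>k\<ge>1. f k \<le> n \<and> n < f (Suc k)"
proof (rule ccontr)
  assume H: "\<not> ?thesis"
  have "f k \<le> n" if "1 \<le> k" for k
    using that
  proof (induction k rule: dec_induct)
    case base then show ?case using assms(2) by simp
  next
    case (step k) then show ?case using H by (meson not_le)
  qed
  then have "f (Suc n) \<le> n" by simp
  moreover have "Suc n \<le> f (Suc n)" using f_ge[OF G] by simp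
  ultimately show False by simp
qed

lemma block_desc:
  assumes "y \<in> Pset q i" "k \<ge> 1"
  shows "\<exists>p \<le> qi q i k. \<forall>t. qi q i k \<le> t \<longrightarrow> t < qi q i (Suc k) \<longrightarrow> y t \<noteq> 0 \<longrightarrow>
          (\<exists>j. 1 \<le> j \<and> j \<le> 2 * Li q i k \<and> t = p + j * qi q i k)"
proof -
  have "restr y (qi q i k) (qi q i (k+1) - 1) \<in> Rset q i k" using assms unfolding Pset_def by blast
  then obtain p where p: "p \<le> qi q i k"
    and eq: "restr y (qi q i k) (qi q i (k+1) - 1) = restr (shiftR p (sblk q i k)) (qi q i k) (qi q i (k+1) - 1)"
    unfolding Rset_def by blast
  show ?thesis
  proof (rule exI[of _ p], intro conjI p allI impI)
    fix t assume t1: "qi q i k \<le> t" and t2: "t < qi q i (Suc k)" and nz: "y t \<noteq> 0"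
    have "t \<in> set [qi q i k..<Suc (qi q i (k+1) - 1)]" using t1 t2 by auto
    moreover have "\<forall>x\<in>set [qi q i k..<Suc (qi q i (k+1) - 1)]. y x = shiftR p (sblk q i k) x"
      using eq unfolding restr_def map_eq_conv .
    ultimately have "y t = shiftR p (sblk q i k) t" by blast
    then have "p < t" and s: "sblk q i k (t - p) \<noteq> 0" using nz unfolding shiftR_def by (auto split: if_splits)
    from s obtain j where "1 \<le> j" "j \<le> 2 * Li q i k" "t - p = j * qi q i k"
      unfolding sblk_def by (auto split: if_splits)
    then show "\<exists>j. 1 \<le> j \<and> j \<le> 2 * Li q i k \<and> t = p + j * qi q i k"
      using \<open>p < t\<close> by (intro exI[of _ j]) auto
  qed
qed

lemma P_sparse:
  assumes G: "\<forall>k\<ge>1. 1 \<le> qi q i k \<and> 6 * qi q i k \<le> qi q i (Suc k)"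
  and y: "y \<in> Pset q i" and J: "J \<ge> 1" and tJ: "qi q i J \<le> t" and tt: "t < t'"
  and nz: "y t \<noteq> 0" "y t' \<noteq> 0"
  shows "qi q i J \<le> t' - t"
proof -
  define Q where "Q = qi q i"
  have G': "\<forall>k\<ge>1. 1 \<le> Q k \<and> 6 * Q k \<le> Q (Suc k)" using G Q_def by simp
  have "Q 1 \<le> Q J" using f_mono[OF G' _ J] by simp
  then have "Q 1 \<le> t" "Q 1 \<le> t'" using tJ tt Q_def by auto
  obtain k where k: "k \<ge> 1" "Q k \<le> t" "t < Q (Suc k)" using f_block[OF G' \<open>Q 1 \<le> t\<close>] by blast
  obtain k' where k': "k' \<ge> 1" "Q k' \<le> t'" "t' < Q (Suc k')" using f_block[OF G' \<open>Q 1 \<le> t'\<close>] by blast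
  have kJ: "J \<le> k"
  proof (rule ccontr)
    assume "\<not> J \<le> k"
    then have "Q (Suc k) \<le> Q J" using f_mono[OF G', of "Suc k" J] by simp
    then show False using k tJ Q_def by simp
  qed
  have kk: "k \<le> k'"
  proof (rule ccontr)
    assume "\<not> k \<le> k'"
    then have "Q (Suc k') \<le> Q k" using f_mono[OF G', of "Suc k'" k] by simp
    then show False using k k' tt by simp
  qed
  have QJk: "Q J \<le> Q k" using f_mono[OF G' J kJ] .
  obtain p where p: "p \<le> Q k" and desc: "\<forall>t. Q k \<le> t \<longrightarrow> t < Q (Suc k) \<longrightarrow> y t \<noteq> 0 \<longrightarrow>
          (\<exists>j. 1 \<le> j \<and> j \<le> 2 * Li q i k \<and> t = p + j * Q k)"
    using block_desc[OF y k(1)] Q_def by blast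
  obtain j where j: "1 \<le> j" "j \<le> 2 * Li q i k" "t = p + j * Q k" using desc k nz by blast
  have "Q k \<le> t' - t"
  proof (cases "k = k'")
    case True
    obtain j' where j': "t' = p + j' * Q k" using desc k' nz True by blast
    have "j < j'"
    proof (rule ccontr)
      assume "\<not> j < j'" then have "j' * Q k \<le> j * Q k" by simp
      then show False using j j' tt by simp
    qed
    then have "(j+1) * Q k \<le> j' * Q k" by (intro mult_le_mono1) simp
    then show ?thesis using j j' by (simp add: algebra_simps)
  next
    case False
    then have "Suc k \<le> k'" using kk by simp
    then have a: "Q (Suc k) \<le> t'" using f_mono[OF G', of "Suc k" k'] k' by simp
    have b: "Li q i k * (3 * Q k) \<le> Q (Suc k)"
      unfolding Li_def Q_def by (simp add: div_times_less_eq_dividend)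
    have c: "j * Q k \<le> (2 * Li q i k) * Q k" using j by (intro mult_le_mono1) simp
    have d: "6 * Q k \<le> Q (Suc k)" using G' k by blast
    have b': "3 * (Li q i k * Q k) \<le> Q (Suc k)" using b by (simp add: algebra_simps)
    have c': "j * Q k \<le> 2 * (Li q i k * Q k)" using c by (simp add: algebra_simps)
    show ?thesis using a b' c' d p j(3) by linarith
  qed
  then show ?thesis using QJk Q_def by simp
qed

definition agree :: "nat \<Rightarrow> pt \<Rightarrow> pt \<Rightarrow> bool" where
  "agree L p u = ((\<forall>n. 1 \<le> n \<and> n \<le> L \<longrightarrow> fst p n = fst u n) \<and> (\<forall>m. \<bar>m\<bar> \<le> int L \<longrightarrow> snd p m = snd u m))"

lemma dN_lt: assumes "dN u v < 3 powr - real L" "1 \<le> n" "n \<le> L" shows "u n = v n"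
proof (rule ccontr)
  assume ne: "u n \<noteq> v n"
  then have nall: "\<not>(\<forall>n\<ge>1. u n = v n)" using assms(2) by blast
  define l where "l = (LEAST n. n \<ge> 1 \<and> u n \<noteq> v n)"
  have "l \<le> n" unfolding l_def by (rule Least_le) (use ne assms(2) in simp)
  have "dN u v = 3 powr - real l" using nall unfolding dN_def l_def by simp
  then have "3 powr - real l < 3 powr - real L" using assms(1) by simp
  then have "L < l" by simp
  then show False using \<open>l \<le> n\<close> assms(3) by simp
qed

lemma dN_le: assumes "\<forall>n. 1 \<le> n \<and> n \<le> L \<longrightarrow> u n = v n" shows "dN u v < 3 powr - real L"
proof (cases "\<forall>n\<ge>1. u n = v n")
  case True then show ?thesis unfolding dN_def by simp
next
  case False
  define l where "l = (LEAST n. n \<ge> 1 \<and> u n \<noteq> v n)"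
  have "l \<ge> 1 \<and> u l \<noteq> v l" unfolding l_def by (rule LeastI_ex) (use False in auto)
  then have "L < l" using assms by (meson not_le)
  moreover have "dN u v = 3 powr - real l" using False unfolding dN_def l_def by simp
  ultimately show ?thesis by simp
qed

lemma dZZ_lt: assumes "dZZ u v < 3 powr - real L" "\<bar>m\<bar> \<le> int L" shows "u m = v m"
proof (rule ccontr)
  assume ne: "u m \<noteq> v m"
  then have nall: "\<not>(\<forall>m. u m = v m)" by blast
  define l where "l = (LEAST k. \<exists>m. nat \<bar>m\<bar> = k \<and> u m \<noteq> v m)"
  have "l \<le> nat \<bar>m\<bar>" unfolding l_def by (rule Least_le) (use ne in blast)
  have "dZZ u v = 3 powr - real l" using nall unfolding dZZ_def l_def by simp
  then have "3 powr - real l < 3 powr - real L" using assms(1) by simp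
  then have "L < l" by simp
  then show False using \<open>l \<le> nat \<bar>m\<bar>\<close> assms(2) by simp
qed

lemma dZZ_le: assumes "\<forall>m. \<bar>m\<bar> \<le> int L \<longrightarrow> u m = v m" shows "dZZ u v < 3 powr - real L"
proof (cases "\<forall>m. u m = v m")
  case True then show ?thesis unfolding dZZ_def by simp
next
  case False
  define l where "l = (LEAST k. \<exists>m. nat \<bar>m\<bar> = k \<and> u m \<noteq> v m)"
  have "\<exists>m. nat \<bar>m\<bar> = l \<and> u m \<noteq> v m" unfolding l_def by (rule LeastI_ex) (use False in auto)
  then obtain m where m: "nat \<bar>m\<bar> = l" "u m \<noteq> v m" by blast
  then have "\<not> \<bar>m\<bar> \<le> int L" using assms by blast
  then have "L < l" using m by simp
  moreover have "dZZ u v = 3 powr - real l" using False unfolding dZZ_def l_def by simp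
  ultimately show ?thesis by simp
qed

lemma dist_agree: "dist_pt p u < 3 powr - real L \<longleftrightarrow> agree L p u"
proof
  assume "dist_pt p u < 3 powr - real L"
  then have a: "dN (fst p) (fst u) < 3 powr - real L" "dZZ (snd p) (snd u) < 3 powr - real L"
    unfolding dist_pt_def by auto
  show "agree L p u" unfolding agree_def using dN_lt[OF a(1)] dZZ_lt[OF a(2)] by blast
next
  assume "agree L p u"
  then show "dist_pt p u < 3 powr - real L" unfolding dist_pt_def agree_def
    using dN_le dZZ_le by simp
qed

lemma pow3: "(3::real) powr - real L = (1/3)^L"
  by (simp add: powr_minus powr_realpow power_one_over inverse_eq_divide)

lemma closure_iff: "p \<in> closureZ S \<longleftrightarrow> p \<in> Zsp \<and> (\<forall>L. \<exists>u\<in>S. agree L p u)"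
proof
  assume "p \<in> closureZ S"
  then have "p \<in> Zsp" and h: "\<forall>e>0. \<exists>q\<in>S. dist_pt p q < e" unfolding closureZ_def by auto
  have "\<exists>u\<in>S. agree L p u" for L
  proof -
    have "(0::real) < 3 powr - real L" by simp
    then obtain u where "u \<in> S" "dist_pt p u < 3 powr - real L" using h by blast
    then show ?thesis using dist_agree by blast
  qed
  then show "p \<in> Zsp \<and> (\<forall>L. \<exists>u\<in>S. agree L p u)" using \<open>p \<in> Zsp\<close> by blast
next
  assume H: "p \<in> Zsp \<and> (\<forall>L. \<exists>u\<in>S. agree L p u)"
  have "\<exists>u\<in>S. dist_pt p u < e" if e: "e > 0" for e
  proof -
    obtain L where L: "(1/3::real)^L < e" using real_arch_pow_inv[OF e, of "1/3"] by auto
    obtain u where "u \<in> S" "agree L p u" using H by blast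
    then have "dist_pt p u < 3 powr - real L" using dist_agree by blast
    then show ?thesis using L pow3 \<open>u \<in> S\<close> by (metis order.strict_trans)
  qed
  then show "p \<in> closureZ S" unfolding closureZ_def using H by blast
qed

lemma fst_Tmap_pow: "fst ((Tmap^^n) p) = (shiftN^^n) (fst p)"
  by (induction n) (simp_all add: Tmap_def)

lemma shiftN_pow: "1 \<le> t \<Longrightarrow> (shiftN^^n) y t = y (t + n)"
  by (induction n arbitrary: t) (simp_all add: shiftN_def)

lemma snd_Tmap_Suc: "snd ((Tmap^^Suc n) p) = shiftZ (fst ((Tmap^^n) p) 1) (snd ((Tmap^^n) p))"
  by (simp add: Tmap_def)

lemma That_pow: "(That^^n) (a,b,c,d,i) = ((Tmap^^n) a, (Tmap^^n) b, (Tmap^^n) c, (Tmap^^n) d, i)"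
  by (induction n) simp_all

lemma Tmap_Zsp: "p \<in> Zsp \<Longrightarrow> Tmap p \<in> Zsp"
  unfolding Zsp_def Tmap_def shiftN_def shiftZ_def tri_def by auto

lemma agree_Tmap: assumes "p \<in> Zsp" "agree (Suc L) p u" shows "agree L (Tmap p) (Tmap u)"
proof -
  have k: "fst p 1 \<in> tri" using assms(1) unfolding Zsp_def by auto
  have e: "fst p 1 = fst u 1" using assms(2) unfolding agree_def by auto
  have "snd p (m + fst p 1) = snd u (m + fst p 1)" if "\<bar>m\<bar> \<le> int L" for m
  proof -
    have "\<bar>m + fst p 1\<bar> \<le> int (Suc L)" using k that unfolding tri_def by auto
    then show ?thesis using assms(2) unfolding agree_def by blast
  qed
  then show ?thesis using assms(2) e unfolding agree_def Tmap_def shiftN_def shiftZ_def by auto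
qed

definition UU :: "(nat \<Rightarrow> nat) \<Rightarrow> nat \<Rightarrow> pt set" where
  "UU q i = (\<Union>n. (Tmap ^^ n) ` (Pset q i \<times> {z. \<forall>m. z m \<in> tri}))"

lemma Xi_UU: "Xi q i = closureZ (UU q i)" unfolding Xi_def UU_def ..

lemma UU_Tmap: "u \<in> UU q i \<Longrightarrow> Tmap u \<in> UU q i"
proof -
  assume "u \<in> UU q i"
  then obtain n w where "w \<in> Pset q i \<times> {z. \<forall>m. z m \<in> tri}" "u = (Tmap^^n) w" unfolding UU_def by blast
  then have "Tmap u = (Tmap^^Suc n) w" by simp
  then show ?thesis using \<open>w \<in> _\<close> unfolding UU_def by blast
qed

lemma Xi_Tmap: assumes "p \<in> Xi q i" shows "Tmap p \<in> Xi q i"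
proof -
  have H: "p \<in> Zsp" "\<forall>L. \<exists>u\<in>UU q i. agree L p u" using assms closure_iff Xi_UU by blast+
  have "\<exists>u\<in>UU q i. agree L (Tmap p) u" for L
  proof -
    obtain u where "u \<in> UU q i" "agree (Suc L) p u" using H by blast
    then show ?thesis using agree_Tmap[OF H(1)] UU_Tmap by blast
  qed
  then show ?thesis using Tmap_Zsp[OF H(1)] closure_iff Xi_UU by blast
qed

lemma Xi_pow: "p \<in> Xi q i \<Longrightarrow> (Tmap^^n) p \<in> Xi q i"
  by (induction n) (simp_all add: Xi_Tmap)

lemma Xi_sparse:
  assumes G: "\<forall>k\<ge>1. 1 \<le> qi q i k \<and> 6 * qi q i k \<le> qi q i (Suc k)"
  and p: "p \<in> Xi q i" and J: "J \<ge> 1" and tJ: "qi q i J \<le> t" and tt: "t < t'"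
  and nz: "fst p t \<noteq> 0" "fst p t' \<noteq> 0"
  shows "qi q i J \<le> t' - t"
proof -
  obtain u where u: "u \<in> UU q i" "agree t' p u" using p closure_iff Xi_UU by blast
  then obtain n y' z' where y': "y' \<in> Pset q i" and ue: "u = (Tmap^^n) (y', z')" unfolding UU_def by blast
  have "1 \<le> qi q i J" using G J by blast
  then have t1: "1 \<le> t" using tJ by simp
  have "fst p t = fst u t" "fst p t' = fst u t'" using u(2) t1 tt unfolding agree_def by auto
  then have "y' (t + n) \<noteq> 0" "y' (t' + n) \<noteq> 0" using nz ue t1 tt
    by (simp_all add: fst_Tmap_pow shiftN_pow)
  then have "qi q i J \<le> (t' + n) - (t + n)" using P_sparse[OF G y' J, of "t+n" "t'+n"] tJ tt by simp
  then show ?thesis by simp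
qed

lemma count_sparse:
  assumes D: "1 \<le> D" and sp: "\<forall>t t'. A \<le> t \<longrightarrow> t < t' \<longrightarrow> t \<in> S \<longrightarrow> t' \<in> S \<longrightarrow> D \<le> t' - t"
  shows "card (S \<inter> {1..N}) \<le> A + N div D + 1"
proof -
  have inj: "inj_on (\<lambda>t. t div D) (S \<inter> {A..N})"
  proof (rule inj_onI)
    fix t t' assume a: "t \<in> S \<inter> {A..N}" "t' \<in> S \<inter> {A..N}" "t div D = t' div D"
    show "t = t'"
    proof (rule ccontr)
      assume "t \<noteq> t'"
      then consider "t < t'" | "t' < t" by linarith
      then show False
      proof cases
        case 1
        then have "t + D \<le> t'" using sp a by force
        then have "(t + D) div D \<le> t' div D" by (rule div_le_mono)
        then show False using a D by simp
      next
        case 2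
        then have "t' + D \<le> t" using sp a by force
        then have "(t' + D) div D \<le> t div D" by (rule div_le_mono)
        then show False using a D by simp
      qed
    qed
  qed
  have "(\<lambda>t. t div D) ` (S \<inter> {A..N}) \<subseteq> {0..N div D}" by (auto intro: div_le_mono)
  then have "card (S \<inter> {A..N}) \<le> card {0..N div D}"
    by (intro card_inj_on_le[OF inj]) auto
  then have c1: "card (S \<inter> {A..N}) \<le> N div D + 1" by simp
  have "S \<inter> {1..N} \<subseteq> {1..<A} \<union> (S \<inter> {A..N})" by auto
  then have "card (S \<inter> {1..N}) \<le> card ({1..<A} \<union> (S \<inter> {A..N}))" by (intro card_mono) auto
  also have "\<dots> \<le> card {1..<A} + card (S \<inter> {A..N})" by (rule card_Un_le)
  finally show ?thesis using c1 by simp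
qed

lemma dens_bound:
  fixes b N K C D :: nat and r :: real
  assumes b: "b \<le> K*(C + 4*((N+K) div D))" and D: "D \<ge> 1" and r: "r > 0"
    and rD: "real D > 8*K/r" and rN: "real N > 2*(K*C + 4*K*K)/r" and N: "N \<ge> 1"
  shows "real b / real N < r"
proof -
  have w: "real ((N+K) div D) \<le> real (N+K) / real D" by (rule of_nat_div_le_of_nat)
  have Dp: "real D > 0" using D by simp
  have "real b \<le> K*C + 4*K*real ((N+K) div D)" using b by (simp add: algebra_simps flip: of_nat_mult of_nat_add)
  also have "\<dots> \<le> K*C + 4*K*(real (N+K) / real D)" using w by (intro add_left_mono mult_left_mono) auto
  also have "\<dots> = K*C + 4*K*K/real D + 4*K*real N/real D" by (simp add: add_divide_distrib algebra_simps)
  also have "\<dots> \<le> K*C + 4*K*K + 4*K*real N/real D"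
  proof -
    have "4*K*K/real D \<le> 4*K*K/1" using D by (intro divide_left_mono) auto
    then show ?thesis by simp
  qed
  finally have b1: "real b \<le> K*C + 4*K*K + 4*K*real N/real D" .
  have "8*K < r * real D" using rD r by (simp add: divide_less_eq mult.commute)
  then have "4*K*real N/real D < r * real N / 2" using Dp N by (simp add: divide_less_eq field_simps)
  moreover have "K*C + 4*K*K < r * real N / 2" using rN r by (simp add: divide_less_eq field_simps)
  ultimately have "real b < r * real N" using b1 by linarith
  then show ?thesis using N by (simp add: divide_less_eq)
qed

lemma cyl_const:
  assumes z: "\<forall>t. n < t \<and> t \<le> n + M + H \<longrightarrow> fst p t = 0" and h: "h < H"
  shows "cyl M ((Tmap^^(n+h)) p) = cyl M ((Tmap^^n) p)"
proof -
  have s: "j \<le> h \<Longrightarrow> snd ((Tmap^^(n+j)) p) = snd ((Tmap^^n) p)" for j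
  proof (induction j)
    case 0 then show ?case by simp
  next
    case (Suc j)
    have "fst ((Tmap^^(n+j)) p) 1 = fst p (1 + (n+j))" by (simp add: fst_Tmap_pow shiftN_pow)
    also have "\<dots> = 0" using z Suc.prems h by simp
    finally have "snd ((Tmap^^(Suc (n+j))) p) = snd ((Tmap^^(n+j)) p)"
      by (simp only: snd_Tmap_Suc) (simp add: shiftZ_def)
    then show ?case using Suc by simp
  qed
  have f: "\<forall>t\<in>set [1..<Suc M]. fst ((Tmap^^(n+h)) p) t = fst ((Tmap^^n) p) t"
  proof
    fix t assume "t \<in> set [1..<Suc M]"
    then have t: "1 \<le> t" "t \<le> M" by auto
    have "fst ((Tmap^^(n+h)) p) t = fst p (t + (n+h))" using t by (simp add: fst_Tmap_pow shiftN_pow)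
    also have "\<dots> = 0" using z t h by simp
    also have "\<dots> = fst p (t + n)" using z t h by simp
    also have "\<dots> = fst ((Tmap^^n) p) t" using t by (simp add: fst_Tmap_pow shiftN_pow)
    finally show "fst ((Tmap^^(n+h)) p) t = fst ((Tmap^^n) p) t" .
  qed
  show ?thesis unfolding cyl_def using f s[of h] by simp
qed

lemma comp_count:
  assumes g: "2 \<le> q 1" "\<forall>k\<ge>1. q k < q (Suc k)" "\<forall>k\<ge>1. q (Suc k) > q k ^ 4 + 3 * q k"
  and p: "p \<in> Xi q i" and D: "D \<ge> 1"
  shows "\<exists>A. \<forall>N. card ({t. fst p t \<noteq> 0} \<inter> {1..N}) \<le> A + N div D + 1"
proof -
  have G: "\<forall>k\<ge>1. 1 \<le> qi q i k \<and> 6 * qi q i k \<le> qi q i (Suc k)" using Q_growth[OF g] .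
  have DQ: "D \<le> qi q i D" using f_ge[OF G D] .
  have "\<forall>t t'. qi q i D \<le> t \<longrightarrow> t < t' \<longrightarrow> t \<in> {t. fst p t \<noteq> 0} \<longrightarrow> t' \<in> {t. fst p t \<noteq> 0} \<longrightarrow> D \<le> t' - t"
  proof (intro allI impI)
    fix t t' assume h: "qi q i D \<le> t" "t < t'" "t \<in> {t. fst p t \<noteq> 0}" "t' \<in> {t. fst p t \<noteq> 0}"
    then have "qi q i D \<le> t' - t" using Xi_sparse[OF G p D, of t t'] by simp
    then show "D \<le> t' - t" using DQ by linarith
  qed
  then show ?thesis using count_sparse[OF D] by blast
qed

theorem mainTheorem12:
  fixes q :: "nat \<Rightarrow> nat" and M H :: nat and x :: xpt
  assumes "2 \<le> q 1"
    and "\<forall>k\<ge>1. q k < q (Suc k)"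
    and "\<forall>k\<ge>1. q (Suc k) > q k ^ 4 + 3 * q k"
    and "M \<ge> 1" and "H \<ge> 1"
    and "x \<in> Xsp q"
  shows "\<exists>\<Lambda>. \<Lambda> \<subseteq> {1..} \<and>
           (\<lambda>N. real (card ({1..N} \<inter> \<Lambda>)) / real N) \<longlonglongrightarrow> 1 \<and>
           (\<forall>F\<in>CM q M. \<forall>n\<in>\<Lambda>. \<forall>h<H. F ((That ^^ (n + h)) x) = F ((That ^^ n) x))"
proof -
  note g = assms(1,2,3)
  obtain a b c d i0 where x: "x = (a,b,c,d,i0)" by (cases x) auto
  have xa: "a \<in> Xi q 0" "b \<in> Xi q 1" "c \<in> Xi q 2" "d \<in> Xi q 3" "i0 \<in> {0,1,2,3}"
    using assms(6) unfolding x Xsp_def by auto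
  define K where "K = M + H"
  define S where "S = {t. fst a t \<noteq> 0} \<union> {t. fst b t \<noteq> 0} \<union> {t. fst c t \<noteq> 0} \<union> {t. fst d t \<noteq> 0}"
  define \<Lambda> where "\<Lambda> = {n. 1 \<le> n \<and> (\<forall>t. n < t \<and> t \<le> n + K \<longrightarrow> t \<notin> S)}"
  have bound: "\<exists>C. \<forall>N. card ({1..N} - \<Lambda>) \<le> K*(C + 4*((N+K) div D))" if D: "D \<ge> 1" for D
  proof -
    obtain Aa where Aa: "\<forall>N. card ({t. fst a t \<noteq> 0} \<inter> {1..N}) \<le> Aa + N div D + 1"
      using comp_count[OF g xa(1) D] by blast
    obtain Ab where Ab: "\<forall>N. card ({t. fst b t \<noteq> 0} \<inter> {1..N}) \<le> Ab + N div D + 1"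
      using comp_count[OF g xa(2) D] by blast
    obtain Ac where Ac: "\<forall>N. card ({t. fst c t \<noteq> 0} \<inter> {1..N}) \<le> Ac + N div D + 1"
      using comp_count[OF g xa(3) D] by blast
    obtain Ad where Ad: "\<forall>N. card ({t. fst d t \<noteq> 0} \<inter> {1..N}) \<le> Ad + N div D + 1"
      using comp_count[OF g xa(4) D] by blast
    have "card ({1..N} - \<Lambda>) \<le> K*((Aa+Ab+Ac+Ad+4) + 4*((N+K) div D))" for N
    proof -
      define X where "X = {1..N+K}"
      have "S \<inter> X = ({t. fst a t \<noteq> 0} \<inter> X \<union> {t. fst b t \<noteq> 0} \<inter> X) \<union> ({t. fst c t \<noteq> 0} \<inter> X \<union> {t. fst d t \<noteq> 0} \<inter> X)"
        unfolding S_def by auto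
      then have u0: "card (S \<inter> X) \<le> card ({t. fst a t \<noteq> 0} \<inter> X \<union> {t. fst b t \<noteq> 0} \<inter> X)
          + card ({t. fst c t \<noteq> 0} \<inter> X \<union> {t. fst d t \<noteq> 0} \<inter> X)"
        by (simp only: card_Un_le)
      have u1: "card ({t. fst a t \<noteq> 0} \<inter> X \<union> {t. fst b t \<noteq> 0} \<inter> X) \<le> card ({t. fst a t \<noteq> 0} \<inter> X) + card ({t. fst b t \<noteq> 0} \<inter> X)"
        by (rule card_Un_le)
      have u2: "card ({t. fst c t \<noteq> 0} \<inter> X \<union> {t. fst d t \<noteq> 0} \<inter> X) \<le> card ({t. fst c t \<noteq> 0} \<inter> X) + card ({t. fst d t \<noteq> 0} \<inter> X)"
        by (rule card_Un_le)
      have v: "card ({t. fst a t \<noteq> 0} \<inter> X) \<le> Aa + (N+K) div D + 1"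
        "card ({t. fst b t \<noteq> 0} \<inter> X) \<le> Ab + (N+K) div D + 1"
        "card ({t. fst c t \<noteq> 0} \<inter> X) \<le> Ac + (N+K) div D + 1"
        "card ({t. fst d t \<noteq> 0} \<inter> X) \<le> Ad + (N+K) div D + 1"
        unfolding X_def using Aa Ab Ac Ad by blast+
      have cS: "card (S \<inter> X) \<le> (Aa+Ab+Ac+Ad+4) + 4*((N+K) div D)"
        using u0 u1 u2 v by linarith
      have sub: "{1..N} - \<Lambda> \<subseteq> (\<lambda>(t,e). t - e) ` ((S \<inter> X) \<times> {1..K})"
      proof
        fix n assume n: "n \<in> {1..N} - \<Lambda>"
        then obtain t where t: "n < t" "t \<le> n + K" "t \<in> S" unfolding \<Lambda>_def by auto
        have "(t, t - n) \<in> (S \<inter> X) \<times> {1..K}" using t n unfolding X_def by auto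
        moreover have "n = (\<lambda>(t,e). t - e) (t, t - n)" using t by simp
        ultimately show "n \<in> (\<lambda>(t,e). t - e) ` ((S \<inter> X) \<times> {1..K})" by blast
      qed
      have fin: "finite ((S \<inter> X) \<times> {1..K})" unfolding X_def by simp
      have "card ({1..N} - \<Lambda>) \<le> card ((\<lambda>(t,e). t - e) ` ((S \<inter> X) \<times> {1..K}))"
        using sub fin by (intro card_mono) auto
      also have "\<dots> \<le> card ((S \<inter> X) \<times> {1..K})" using fin by (rule card_image_le)
      also have "\<dots> = card (S \<inter> X) * K" by (simp add: card_cartesian_product)
      also have "\<dots> \<le> K*((Aa+Ab+Ac+Ad+4) + 4*((N+K) div D))" using cS by (simp add: mult.commute)
      finally show ?thesis .
    qed
    then show ?thesis by blast
  qed
  have lim: "(\<lambda>N. real (card ({1..N} \<inter> \<Lambda>)) / real N) \<longlonglongrightarrow> 1"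
  proof (rule LIMSEQ_I)
    fix r :: real assume r: "r > 0"
    define D where "D = nat \<lceil>8*K/r\<rceil> + 1"
    have D1: "D \<ge> 1" unfolding D_def by simp
    have rD: "real D > 8*K/r" unfolding D_def by linarith
    obtain C where C: "\<forall>N. card ({1..N} - \<Lambda>) \<le> K*(C + 4*((N+K) div D))" using bound[OF D1] by blast
    define no where "no = nat \<lceil>2*(K*C + 4*K*K)/r\<rceil> + 1"
    have "norm (real (card ({1..N} \<inter> \<Lambda>)) / real N - 1) < r" if N: "N \<ge> no" for N
    proof -
      have N1: "N \<ge> 1" using N unfolding no_def by simp
      have rN: "real N > 2*(K*C + 4*K*K)/r" using N unfolding no_def by linarith
      have "card ({1..N} \<inter> \<Lambda>) + card ({1..N} - \<Lambda>) = card {1..N}"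
      proof -
        have un: "card (({1..N} \<inter> \<Lambda>) \<union> ({1..N} - \<Lambda>)) = card ({1..N} \<inter> \<Lambda>) + card ({1..N} - \<Lambda>)"
          by (rule card_Un_disjoint) auto
        have "({1..N} \<inter> \<Lambda>) \<union> ({1..N} - \<Lambda>) = {1..N}" by auto
        then show ?thesis using un by simp
      qed
      then have e: "real (card ({1..N} \<inter> \<Lambda>)) = real N - real (card ({1..N} - \<Lambda>))" by simp
      have "real (card ({1..N} - \<Lambda>)) / real N < r"
        using dens_bound[OF C[rule_format, of N] D1 r rD rN N1] .
      moreover have "real (card ({1..N} \<inter> \<Lambda>)) / real N - 1 = - (real (card ({1..N} - \<Lambda>)) / real N)"
        using N1 unfolding e by (simp add: diff_divide_distrib)
      ultimately show ?thesis by simp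
    qed
    then show "\<exists>no. \<forall>N\<ge>no. norm (real (card ({1..N} \<inter> \<Lambda>)) / real N - 1) < r" by blast
  qed
  have cm: "\<forall>F\<in>CM q M. \<forall>n\<in>\<Lambda>. \<forall>h<H. F ((That ^^ (n + h)) x) = F ((That ^^ n) x)"
  proof (intro ballI allI impI)
    fix F n h assume F: "F \<in> CM q M" and n: "n \<in> \<Lambda>" and h: "h < H"
    have z: "\<forall>t. n < t \<and> t \<le> n + M + H \<longrightarrow> fst p t = 0" if "p \<in> {a,b,c,d}" for p
      using n that unfolding \<Lambda>_def S_def K_def by auto
    have X1: "(That ^^ (n + h)) x \<in> Xsp q" "(That ^^ n) x \<in> Xsp q"
      unfolding x That_pow Xsp_def using xa Xi_pow by auto
    have "sameM M ((That ^^ (n + h)) x) ((That ^^ n) x)"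
      unfolding x That_pow using cyl_const[OF z h] by simp
    then show "F ((That ^^ (n + h)) x) = F ((That ^^ n) x)" using F X1 unfolding CM_def by blast
  qed
  have "\<Lambda> \<subseteq> {1..}" unfolding \<Lambda>_def by auto
  then show ?thesis using lim cm by blast
qed

end
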